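(* Let $g:\mathbb N\to\mathbb N$ be superlinear. For every $\alpha>1$, the class $\mathcal C_g$ is neither adaptively additively $\alpha$-robustly learnable nor adaptively subtractively $\alpha$-robustly learnable.
   Context: Let $\{B_i\}_{i\in\mathbb N}$ enumerate the finite subsets of $\mathbb N$; $p_{i,j,k}=(1-\frac1j)\delta_{(0,0)}+(\frac1j-\frac1k)U_{B_i\times\{2j+1\}}+\frac1k\delta_{(i,2j+2)}$ on $\mathbb N\times\mathbb N$; $\mathcal C_g=\{p_{i,j,g(j)}:i,j\in\mathbb N\}$. Superlinear: $g(j)/j\to\infty$. Samples are multisets; an adaptive adversary is a randomized map $V$ from finite multisets to finite multisets, additive if $S\subset V(S)$, subtractive if $V(S)\subset S$, with fixed constant budget $\eta=\mathrm{budget}(V)$: $|V(S)|$ depends only on $|S|$ and $\eta m-1<\sup_{|S|=m}\big||V(S)|-|S|\big|\le\eta m$. $\mathcal C$ is adaptively additively (resp. subtractively) $\alpha$-robustly learnable if there are a learner $A$ and $m(\epsilon,\delta)$ such that for all $p\in\mathcal C$, all adaptive additive (resp. subtractive) adversaries $V$, $\epsilon,\delta\in(0,1)$, $m\ge m(\epsilon,\delta)$, with probability $\ge1-\delta$ over $S\sim p^m$, $d_{\mathrm{TV}}(A(V(S)),p)\le\alpha\,\mathrm{budget}(V)+\epsilon$. *)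

theory Defs
  imports "HOL-Probability.Probability"
begin

type_synonym pt = "nat \<times> nat"

definition tv_dist :: "pt pmf \<Rightarrow> pt pmf \<Rightarrow> real" where
  "tv_dist P Q = (SUP A. \<bar>measure_pmf.prob P A - measure_pmf.prob Q A\<bar>)"

text \<open>The distribution p_{i,j,k} (well defined when j >= 1, k >= j, B i finite nonempty).\<close>
definition p_dist :: "(nat \<Rightarrow> nat set) \<Rightarrow> nat \<Rightarrow> nat \<Rightarrow> nat \<Rightarrow> pt pmf" where
  "p_dist B i j k = embed_pmf (\<lambda>x.
       (1 - 1 / real j) * indicator {(0, 0)} x
     + (1 / real j - 1 / real k) * indicator (B i \<times> {2 * j + 1}) x / real (card (B i))
     + (1 / real k) * indicator {(i, 2 * j + 2)} x)"

text \<open>The class C_g (only the indices for which p_{i,j,g(j)} is a genuine distribution).\<close>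
definition C_class :: "(nat \<Rightarrow> nat set) \<Rightarrow> (nat \<Rightarrow> nat) \<Rightarrow> pt pmf set" where
  "C_class B g = {p_dist B i j (g j) | i j. 1 \<le> j \<and> j \<le> g j \<and> B i \<noteq> {}}"

definition superlinear :: "(nat \<Rightarrow> nat) \<Rightarrow> bool" where
  "superlinear g \<longleftrightarrow> filterlim (\<lambda>j. real (g j) / real j) at_top sequentially"

fun sample_pmf :: "pt pmf \<Rightarrow> nat \<Rightarrow> pt multiset pmf" where
  "sample_pmf p 0 = return_pmf {#}"
| "sample_pmf p (Suc m) = bind_pmf p (\<lambda>x. map_pmf (add_mset x) (sample_pmf p m))"

type_synonym adversary = "pt multiset \<Rightarrow> pt multiset pmf"

definition additive_adv :: "adversary \<Rightarrow> bool" where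
  "additive_adv V \<longleftrightarrow> (\<forall>S. \<forall>T \<in> set_pmf (V S). S \<subseteq># T)"

definition subtractive_adv :: "adversary \<Rightarrow> bool" where
  "subtractive_adv V \<longleftrightarrow> (\<forall>S. \<forall>T \<in> set_pmf (V S). T \<subseteq># S)"

definition has_budget :: "adversary \<Rightarrow> real \<Rightarrow> bool" where
  "has_budget V \<eta> \<longleftrightarrow> (\<exists>f :: nat \<Rightarrow> nat.
     (\<forall>S. \<forall>T \<in> set_pmf (V S). size T = f (size S)) \<and>
     (\<forall>m. \<eta> * real m - 1 < \<bar>real (f m) - real m\<bar> \<and> \<bar>real (f m) - real m\<bar> \<le> \<eta> * real m))"

definition adaptive_robustly_learnable ::
    "(adversary \<Rightarrow> bool) \<Rightarrow> pt pmf set \<Rightarrow> real \<Rightarrow> bool" where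
  "adaptive_robustly_learnable Adv C \<alpha> \<longleftrightarrow>
     (\<exists>(A :: pt multiset \<Rightarrow> pt pmf) (m0 :: real \<Rightarrow> real \<Rightarrow> nat).
       \<forall>p \<in> C. \<forall>V \<eta>. Adv V \<longrightarrow> has_budget V \<eta> \<longrightarrow>
         (\<forall>\<epsilon> \<delta> m. 0 < \<epsilon> \<longrightarrow> \<epsilon> < 1 \<longrightarrow> 0 < \<delta> \<longrightarrow> \<delta> < 1 \<longrightarrow> m0 \<epsilon> \<delta> \<le> m \<longrightarrow>
           measure_pmf.prob (bind_pmf (sample_pmf p m) V)
             {T. tv_dist (A T) p \<le> \<alpha> * \<eta> + \<epsilon>} \<ge> 1 - \<delta>))"

abbreviation "adaptively_additively_robustly_learnable \<equiv> adaptive_robustly_learnable additive_adv"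
abbreviation "adaptively_subtractively_robustly_learnable \<equiv> adaptive_robustly_learnable subtractive_adv"

end

theory Submission
  imports Defs
begin

lemma sum_ind_aux:
  fixes c :: real
  assumes "finite A" "S \<subseteq> A"
  shows "(\<Sum>x\<in>A. c * indicator S x) = c * card S"
proof -
  have "(\<Sum>x\<in>A. c * indicator S x) = (\<Sum>x\<in>A. if x \<in> S then c else 0)"
    by (intro sum.cong) (auto simp: indicator_def)
  also have "\<dots> = (\<Sum>x\<in>A \<inter> S. c)" by (simp add: sum.If_cases[OF assms(1)])
  also have "A \<inter> S = S" using assms by auto
  finally show ?thesis by simp
qed

lemma pmf_p_dist:
  assumes "1 \<le> j" "j \<le> k" "finite (B i)" "B i \<noteq> {}"
  shows "pmf (p_dist B i j k) x = (1 - 1 / real j) * indicator {(0, 0)} x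
     + (1 / real j - 1 / real k) * indicator (B i \<times> {2 * j + 1}) x / real (card (B i))
     + (1 / real k) * indicator {(i, 2 * j + 2)} x"
  unfolding p_dist_def
proof (rule pmf_embed_pmf)
  have j0: "real j \<ge> 1" using assms by simp
  have jk: "1 / real k \<le> 1 / real j" using assms by (simp add: frac_le)
  have a1: "0 \<le> 1 - 1 / real j" using j0 by (simp add: field_simps)
  have a2: "0 \<le> 1 / real j - 1 / real k" using jk by simp
  show "0 \<le> (1 - 1 / real j) * indicator {(0, 0)} y
     + (1 / real j - 1 / real k) * indicator (B i \<times> {2 * j + 1}) y / real (card (B i))
     + (1 / real k) * indicator {(i, 2 * j + 2)} y" for y :: pt
    using a1 a2 by (intro add_nonneg_nonneg mult_nonneg_nonneg divide_nonneg_nonneg) auto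
  define f where "f = (\<lambda>y::pt. (1 - 1 / real j) * indicator {(0, 0)} y
     + (1 / real j - 1 / real k) * indicator (B i \<times> {2 * j + 1}) y / real (card (B i))
     + (1 / real k) * indicator {(i, 2 * j + 2)} y)"
  define A where "A = insert (0,0) (insert (i, 2*j+2) (B i \<times> {2*j+1}))"
  have fA: "finite A" using assms unfolding A_def by auto
  have fnn: "0 \<le> f y" for y
    unfolding f_def using a1 a2 by (intro add_nonneg_nonneg mult_nonneg_nonneg divide_nonneg_nonneg) auto
  have "(\<integral>\<^sup>+y. ennreal (f y) \<partial>count_space UNIV) = (\<Sum>y\<in>A. ennreal (f y))"
    by (rule nn_integral_count_space') (use assms(3) in \<open>auto simp: fA A_def f_def\<close>)
  also have "\<dots> = ennreal (\<Sum>y\<in>A. f y)" using fnn by (simp add: sum_ennreal)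
  also have "(\<Sum>y\<in>A. f y) = 1"
  proof -
    have c: "card (B i \<times> {2*j+1}) = card (B i)" by (simp add: card_cartesian_product)
    have "(\<Sum>y\<in>A. f y) = (1 - 1 / real j) * card {(0::nat,0::nat)}
       + ((1 / real j - 1 / real k) / real (card (B i))) * card (B i \<times> {2 * j + 1})
       + (1 / real k) * card {(i, 2 * j + 2)}"
    proof -
      have fe: "f y = (1 - 1 / real j) * indicator {(0::nat,0::nat)} y
       + ((1 / real j - 1 / real k) / real (card (B i))) * indicator (B i \<times> {2 * j + 1}) y
       + (1 / real k) * indicator {(i, 2 * j + 2)} y" for y by (simp add: f_def)
      have s1: "{(0::nat,0::nat)} \<subseteq> A" "B i \<times> {2 * j + 1} \<subseteq> A" "{(i, 2 * j + 2)} \<subseteq> A"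
        by (auto simp: A_def)
      show ?thesis unfolding fe sum.distrib
        by (simp only: sum_ind_aux[OF fA s1(1)] sum_ind_aux[OF fA s1(2)] sum_ind_aux[OF fA s1(3)])
    qed
    also have "\<dots> = 1" using c assms j0 by (simp add: field_simps)
    finally show ?thesis .
  qed
  finally show "(\<integral>\<^sup>+y. ennreal (f y) \<partial>count_space UNIV) = 1" by simp
qed


lemma sample_map: "sample_pmf (map_pmf \<sigma> p) m = map_pmf (image_mset \<sigma>) (sample_pmf p m)"
  by (induction m) (simp_all add: map_bind_pmf bind_map_pmf pmf.map_comp o_def)

lemma sample_support:
  "S \<in> set_pmf (sample_pmf p m) \<Longrightarrow> set_mset S \<subseteq> set_pmf p \<and> size S = m"
  by (induction m arbitrary: S) fastforce+

lemma sample_count_nn: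
  "(\<integral>\<^sup>+S. ennreal (real (count S a)) \<partial>sample_pmf p m) = ennreal (real m * pmf p a)"
proof (induction m)
  case 0
  then show ?case by simp
next
  case (Suc m)
  have "(\<integral>\<^sup>+S. ennreal (real (count S a)) \<partial>sample_pmf p (Suc m))
      = (\<integral>\<^sup>+x. \<integral>\<^sup>+S. ennreal (real (count S a)) + ennreal (indicator {a} x) \<partial>sample_pmf p m \<partial>p)"
    by (simp add: indicator_def ennreal_plus[symmetric] del: ennreal_plus)
       (intro nn_integral_cong, auto)
  also have "\<dots> = (\<integral>\<^sup>+x. ennreal (real m * pmf p a) + ennreal (indicator {a} x) \<partial>p)"
    by (simp add: nn_integral_add Suc)
  also have "\<dots> = ennreal (real m * pmf p a) + ennreal (pmf p a)"
    by (simp add: nn_integral_add emeasure_pmf_single ennreal_indicator)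
  also have "\<dots> = ennreal (real (Suc m) * pmf p a)"
    by (simp add: ennreal_plus[symmetric] algebra_simps del: ennreal_plus)
  finally show ?case .
qed

lemma sample_markov:
  "measure (sample_pmf p m) {S. t < count S a} * (real t + 1) \<le> real m * pmf p a"
proof -
  let ?E = "{S. t < count S a}"
  have "(\<integral>\<^sup>+S. ennreal (real t + 1) * indicator ?E S \<partial>sample_pmf p m)
        \<le> (\<integral>\<^sup>+S. ennreal (real (count S a)) \<partial>sample_pmf p m)"
    by (intro nn_integral_mono) (auto simp: indicator_def ennreal_plus[symmetric] simp del: ennreal_plus)
  also have "\<dots> = ennreal (real m * pmf p a)" by (rule sample_count_nn)
  finally have "ennreal (real t + 1) * emeasure (sample_pmf p m) ?E \<le> ennreal (real m * pmf p a)"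
    by (simp add: nn_integral_cmult)
  then have "ennreal ((real t + 1) * measure (sample_pmf p m) ?E) \<le> ennreal (real m * pmf p a)"
    by (simp add: measure_pmf.emeasure_eq_measure ennreal_mult)
  then show ?thesis by (simp add: ennreal_le_iff mult.commute)
qed


definition partner :: "nat \<Rightarrow> nat" where "partner u = (if even u then Suc u else u - 1)"

lemma partner_partner[simp]: "partner (partner u) = u"
  by (auto simp: partner_def)

lemma partner_neq: "partner u \<noteq> u"
  by (auto simp: partner_def dest: odd_pos)

lemma partner_less: "u < 2 * n \<Longrightarrow> partner u < 2 * n"
  by (auto simp: partner_def)

lemma partner_inj: "partner u = partner v \<Longrightarrow> u = v"
  by (metis partner_partner)

definition Hs :: "nat \<Rightarrow> nat set set" where
  "Hs n = {D. D \<subseteq> {..<2*n} \<and> (\<forall>u<2*n. u \<in> D \<longleftrightarrow> partner u \<notin> D)}"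

lemma Hs_finite: "finite (Hs n)"
proof -
  have "Hs n \<subseteq> Pow {..<2*n}" by (auto simp: Hs_def)
  then show ?thesis by (rule finite_subset) simp
qed

lemma Hs_nonempty: "{u. u < 2*n \<and> even u} \<in> Hs n"
  by (auto simp: Hs_def partner_def partner_less)

lemma Hs_finite_mem: "D \<in> Hs n \<Longrightarrow> finite D"
  unfolding Hs_def by (auto intro: finite_subset)

lemma Hs_card: assumes "D \<in> Hs n" shows "card D = n"
proof -
  have D: "D \<subseteq> {..<2*n}" "\<And>u. u < 2*n \<Longrightarrow> u \<in> D \<longleftrightarrow> partner u \<notin> D"
    using assms by (auto simp: Hs_def)
  have "bij_betw (\<lambda>u. u div 2) D {..<n}"
  proof (rule bij_betwI')
    fix x y assume xy: "x \<in> D" "y \<in> D"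
    show "(x div 2 = y div 2) = (x = y)"
    proof
      assume e: "x div 2 = y div 2"
      show "x = y"
      proof (rule ccontr)
        assume "x \<noteq> y"
        then have "y = partner x" using e by (auto simp: partner_def) presburger+
        then show False using xy D by auto
      qed
    qed simp
  next
    fix x assume "x \<in> D" then show "x div 2 \<in> {..<n}" using D by auto
  next
    fix t assume "t \<in> {..<n}"
    then have t: "2*t < 2*n" "partner (2*t) = 2*t+1" by (auto simp: partner_def)
    show "\<exists>x\<in>D. t = x div 2"
    proof (cases "2*t \<in> D")
      case True then show ?thesis by (intro bexI[of _ "2*t"]) auto
    next
      case False then have "2*t+1 \<in> D" using D(2)[OF t(1)] t by auto
      then show ?thesis by (intro bexI[of _ "2*t+1"]) auto
    qed
  qed
  then show ?thesis by (simp add: bij_betw_same_card)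
qed

definition flp :: "nat set \<Rightarrow> nat set \<Rightarrow> nat set" where
  "flp D R = R \<union> partner ` (D - R)"

lemma flp_Hs:
  assumes "D \<in> Hs n" "R \<subseteq> D"
  shows "flp D R \<in> Hs n"
proof -
  have D: "D \<subseteq> {..<2*n}" "\<And>u. u < 2*n \<Longrightarrow> u \<in> D \<longleftrightarrow> partner u \<notin> D"
    using assms by (auto simp: Hs_def)
  show ?thesis unfolding Hs_def flp_def
  proof (intro CollectI conjI allI impI)
    show "R \<union> partner ` (D - R) \<subseteq> {..<2 * n}" using D(1) assms(2) by (auto intro: partner_less)
    fix u assume u: "u < 2*n"
    have pu: "partner u < 2*n" using u by (rule partner_less)
    show "(u \<in> R \<union> partner ` (D - R)) = (partner u \<notin> R \<union> partner ` (D - R))"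
      using D(2)[OF u] D(2)[OF pu] assms(2)
      by (auto simp: image_iff dest: partner_inj) (metis DiffI partner_partner)+
  qed
qed

lemma flp_props:
  assumes "D \<in> Hs n" "R \<subseteq> D"
  shows "flp D R - R = partner ` (D - R)" "D - flp D R = D - R" "flp D R - D = partner ` (D - R)"
    "flp (flp D R) R = D" "R \<subseteq> flp D R"
proof -
  have D: "D \<subseteq> {..<2*n}" "\<And>u. u < 2*n \<Longrightarrow> u \<in> D \<longleftrightarrow> partner u \<notin> D"
    using assms by (auto simp: Hs_def)
  have pn: "partner x \<notin> D" if "x \<in> D" for x using that D by auto
  show 1: "flp D R - R = partner ` (D - R)" unfolding flp_def using pn assms(2) by auto
  show "D - flp D R = D - R" unfolding flp_def using pn assms(2) by (auto simp: image_iff)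
  show "flp D R - D = partner ` (D - R)" unfolding flp_def using pn assms(2) by auto
  show "flp (flp D R) R = D" unfolding flp_def[of "flp D R"] 1 image_image using assms(2) by auto
  show "R \<subseteq> flp D R" unfolding flp_def by auto
qed


locale cset =
  fixes B :: "nat \<Rightarrow> nat set" and j k n :: nat
  assumes Bbij: "bij_betw B UNIV {A. finite A}" and j1: "1 \<le> j" and jk: "j \<le> k" and n1: "1 \<le> n"
begin

definition idx :: "nat set \<Rightarrow> nat" where "idx D = inv B D"
definition rv :: "nat set \<Rightarrow> pt" where "rv D = (idx D, 2*j+2)"
definition pD :: "nat set \<Rightarrow> pt pmf" where "pD D = p_dist B (idx D) j k"
definition cc :: real where "cc = 1 / real j - 1 / real k"

lemma B_idx: "finite D \<Longrightarrow> B (idx D) = D"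
  unfolding idx_def using Bbij by (metis bij_betw_imp_surj_on f_inv_into_f mem_Collect_eq)

lemma idx_inj: "finite D \<Longrightarrow> finite D' \<Longrightarrow> idx D = idx D' \<Longrightarrow> D = D'"
  by (metis B_idx)

lemma rv_inj: "D \<in> Hs n \<Longrightarrow> D' \<in> Hs n \<Longrightarrow> rv D = rv D' \<Longrightarrow> D = D'"
  unfolding rv_def by (metis Hs_finite_mem idx_inj prod.inject)

lemma pmf_pD:
  assumes "D \<in> Hs n"
  shows "pmf (pD D) z = (if z = (0,0) then 1 - 1 / real j else 0)
     + (if fst z \<in> D \<and> snd z = 2*j+1 then cc / real n else 0)
     + (if z = rv D then 1 / real k else 0)"
proof -
  have f: "finite D" "D \<noteq> {}" "card D = n" using Hs_finite_mem[OF assms] Hs_card[OF assms] n1 by auto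
  have "pmf (pD D) z = (1 - 1 / real j) * indicator {(0, 0)} z
     + (1 / real j - 1 / real k) * indicator (B (idx D) \<times> {2 * j + 1}) z / real (card (B (idx D)))
     + (1 / real k) * indicator {(idx D, 2 * j + 2)} z"
    unfolding pD_def by (rule pmf_p_dist) (use j1 jk f B_idx in auto)
  also have "\<dots> = (if z = (0,0) then 1 - 1 / real j else 0)
     + (if fst z \<in> D \<and> snd z = 2*j+1 then cc / real n else 0)
     + (if z = rv D then 1 / real k else 0)"
    using f B_idx[of D] by (cases z) (auto simp: indicator_def cc_def rv_def)
  finally show ?thesis .
qed

lemma set_pD: "D \<in> Hs n \<Longrightarrow> z \<in> set_pmf (pD D) \<Longrightarrow> z = (0,0) \<or> (fst z \<in> D \<and> snd z = 2*j+1) \<or> z = rv D"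
  by (auto simp: set_pmf_eq pmf_pD split: if_splits)

definition swp :: "nat set \<Rightarrow> nat set \<Rightarrow> pt \<Rightarrow> pt" where
  "swp D D' z = (if z = rv D then rv D' else if z = rv D' then rv D
     else if snd z = 2*j+1 \<and> fst z \<in> (D - D') \<union> (D' - D) then (partner (fst z), snd z) else z)"

lemma swp_sym: "swp D D' = swp D' D"
proof (rule ext)
  fix z
  have u: "(D - D') \<union> (D' - D) = (D' - D) \<union> (D - D')" by blast
  show "swp D D' z = swp D' D z"
    by (cases "z = rv D"; cases "z = rv D'") (simp_all add: swp_def u)
qed

lemma rv_snd: "snd (rv D) = 2*j+2" by (simp add: rv_def)

lemma swp_invol:
  assumes "D \<in> Hs n" "R \<subseteq> D"
  shows "swp D (flp D R) (swp D (flp D R) z) = z"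
proof -
  let ?D' = "flp D R" let ?s = "swp D ?D'"
  have cl: "partner x \<in> (D - ?D') \<union> (?D' - D)" if "x \<in> (D - ?D') \<union> (?D' - D)" for x
    using that flp_props[OF assms] by auto
  consider (a) "z = rv D" | (b) "z \<noteq> rv D" "z = rv ?D'"
    | (c) "z \<noteq> rv D" "z \<noteq> rv ?D'" "snd z = 2*j+1 \<and> fst z \<in> (D - ?D') \<union> (?D' - D)"
    | (d) "z \<noteq> rv D" "z \<noteq> rv ?D'" "\<not> (snd z = 2*j+1 \<and> fst z \<in> (D - ?D') \<union> (?D' - D))"
    by blast
  then show ?thesis
  proof cases
    case a
    then show ?thesis by (cases "rv ?D' = rv D") (simp_all add: swp_def)
  next
    case b
    then show ?thesis by (simp add: swp_def)
  next
    case c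
    have w: "?s z = (partner (fst z), snd z)" using c by (simp add: swp_def)
    have w1: "(partner (fst z), snd z) \<noteq> rv D" "(partner (fst z), snd z) \<noteq> rv ?D'"
      using c rv_snd[of D] rv_snd[of ?D'] by (metis Suc_eq_plus1 add_2_eq_Suc' n_not_Suc_n snd_conv)+
    have w2: "partner (fst z) \<in> (D - ?D') \<union> (?D' - D)" using cl c by blast
    show ?thesis unfolding w using w1 w2 c by (cases z) (simp add: swp_def)
  next
    case d
    then have "?s z = z" unfolding swp_def by (simp only: if_not_P[OF d(1)] if_not_P[OF d(2)] if_not_P[OF d(3)] if_False)
    then show ?thesis by simp
  qed
qed

lemma swp_inj: "D \<in> Hs n \<Longrightarrow> R \<subseteq> D \<Longrightarrow> inj (swp D (flp D R))"
  by (metis injI swp_invol)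

lemma pmf_rv: "D \<in> Hs n \<Longrightarrow> pmf (pD D) (rv E) = (if rv E = rv D then 1 / real k else 0)"
  by (simp add: pmf_pD rv_def)

lemma pmf_mid: "D \<in> Hs n \<Longrightarrow> pmf (pD D) (u, 2*j+1) = (if u \<in> D then cc / real n else 0)"
  by (simp add: pmf_pD rv_def)

lemma pmf_other: "D \<in> Hs n \<Longrightarrow> snd z \<noteq> 2*j+1 \<Longrightarrow> z \<noteq> rv D \<Longrightarrow>
    pmf (pD D) z = (if z = (0,0) then 1 - 1 / real j else 0)"
  by (simp add: pmf_pD)

lemma map_swp:
  assumes "D \<in> Hs n" "R \<subseteq> D"
  shows "map_pmf (swp D (flp D R)) (pD D) = pD (flp D R)"
proof (rule pmf_eqI)
  fix y
  let ?D' = "flp D R" let ?s = "swp D ?D'"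
  have D'H: "?D' \<in> Hs n" by (rule flp_Hs[OF assms])
  have "pmf (map_pmf ?s (pD D)) y = pmf (map_pmf ?s (pD D)) (?s (?s y))"
    using swp_invol[OF assms] by simp
  also have "\<dots> = pmf (pD D) (?s y)" by (rule pmf_map_inj'[OF swp_inj[OF assms]])
  also have "\<dots> = pmf (pD ?D') y"
  proof -
    have D: "D \<subseteq> {..<2*n}" "\<And>u. u < 2*n \<Longrightarrow> u \<in> D \<longleftrightarrow> partner u \<notin> D"
      using assms by (auto simp: Hs_def)
    have key: "(partner x \<in> D) = (x \<in> ?D')" if "x \<in> (D - ?D') \<union> (?D' - D)" for x
    proof -
      have "x < 2*n" using that D'H D(1) by (auto simp: Hs_def)
      then show ?thesis using that D(2) by auto
    qed
    consider (a) "y = rv ?D'" | (b) "y \<noteq> rv ?D'" "y = rv D"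
      | (c) "y \<noteq> rv D" "y \<noteq> rv ?D'" "snd y = 2*j+1 \<and> fst y \<in> (D - ?D') \<union> (?D' - D)"
      | (d) "y \<noteq> rv D" "y \<noteq> rv ?D'" "\<not> (snd y = 2*j+1 \<and> fst y \<in> (D - ?D') \<union> (?D' - D))"
      by blast
    then show ?thesis
    proof cases
      case a
      then have "?s y = rv D" by (cases "rv ?D' = rv D") (simp_all add: swp_def)
      then show ?thesis using a by (simp add: pmf_rv assms(1) D'H)
    next
      case b
      then have "?s y = rv ?D'" by (simp add: swp_def)
      then show ?thesis using b by (simp add: pmf_rv assms(1) D'H)
    next
      case c
      obtain u where y: "y = (u, 2*j+1)" using c by (cases y) auto
      have sy: "?s (u, 2*j+1) = (partner u, 2*j+1)" using c y by (simp add: swp_def)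
      show ?thesis unfolding y sy pmf_mid[OF assms(1)] pmf_mid[OF D'H] using key[of u] c y by simp
    next
      case d
      then have sy: "?s y = y" unfolding swp_def
        by (simp only: if_not_P[OF d(1)] if_not_P[OF d(2)] if_not_P[OF d(3)] if_False)
      show ?thesis
      proof (cases "snd y = 2*j+1")
        case True
        obtain u where y: "y = (u, 2*j+1)" using True by (cases y) auto
        have "u \<in> D \<longleftrightarrow> u \<in> ?D'" using d(3) y by auto
        then show ?thesis using sy unfolding y by (simp only: pmf_mid[OF assms(1)] pmf_mid[OF D'H])
      next
        case False
        then show ?thesis using sy d by (simp add: pmf_other assms(1) D'H)
      qed
    qed
  qed
  finally show "pmf (map_pmf ?s (pD D)) y = pmf (pD ?D') y" .
qed

end

lemma card_set_mset_le_size: "card (set_mset M) \<le> size M"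
proof (induction M)
  case empty then show ?case by simp
next
  case (add x M)
  have "card (set_mset (add_mset x M)) \<le> Suc (card (set_mset M))"
    by (simp add: card_insert_le_m1 card_insert_if)
  then show ?case using add by simp
qed

lemma image_mset_invol:
  assumes "\<And>z. \<sigma> (\<sigma> z) = z"
  shows "image_mset \<sigma> (image_mset \<sigma> M) = M"
  by (simp add: multiset.map_comp o_def assms)

lemma image_mset_invol_inj:
  assumes "\<And>z. \<sigma> (\<sigma> z) = z"
  shows "inj (image_mset \<sigma>)"
  by (metis image_mset_invol[OF assms] injI)

context cset
begin

definition Rs :: "nat set \<Rightarrow> pt multiset \<Rightarrow> nat set" where
  "Rs D S = {u \<in> D. (u, 2*j+1) \<in># S}"
definition D2 :: "nat set \<Rightarrow> pt multiset \<Rightarrow> nat set" where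
  "D2 D S = flp D (Rs D S)"
definition sg :: "nat set \<Rightarrow> pt multiset \<Rightarrow> pt \<Rightarrow> pt" where
  "sg D S = swp D (D2 D S)"
definition psi :: "nat set \<times> pt multiset \<Rightarrow> nat set \<times> pt multiset" where
  "psi z = (D2 (fst z) (snd z), image_mset (sg (fst z) (snd z)) (snd z))"

lemma Rs_sub: "Rs D S \<subseteq> D" by (auto simp: Rs_def)

lemma Rs_card: "card (Rs D S) \<le> size S"
proof -
  have "Rs D S \<subseteq> fst ` set_mset S" by (force simp: Rs_def)
  then have "card (Rs D S) \<le> card (fst ` set_mset S)" by (intro card_mono) auto
  also have "\<dots> \<le> card (set_mset S)" by (rule card_image_le) simp
  also have "\<dots> \<le> size S" by (rule card_set_mset_le_size)
  finally show ?thesis .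
qed

lemma D2_Hs: "D \<in> Hs n \<Longrightarrow> D2 D S \<in> Hs n"
  unfolding D2_def by (rule flp_Hs[OF _ Rs_sub])

lemma sg_invol: "D \<in> Hs n \<Longrightarrow> sg D S (sg D S z) = z"
  unfolding sg_def D2_def by (rule swp_invol[OF _ Rs_sub])

lemma D_minus_R_ne:
  assumes "D \<in> Hs n" "size S < n"
  shows "D - Rs D S \<noteq> {}"
proof
  assume "D - Rs D S = {}"
  then have "D \<subseteq> Rs D S" by auto
  then have "card D \<le> card (Rs D S)" by (intro card_mono) (auto simp: Rs_def intro: finite_subset[OF _ Hs_finite_mem[OF assms(1)]])
  then show False using Hs_card[OF assms(1)] Rs_card[of D S] assms(2) by simp
qed

lemma D2_ne:
  assumes "D \<in> Hs n" "size S < n"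
  shows "D2 D S \<noteq> D" "rv (D2 D S) \<noteq> rv D"
proof -
  have "D - D2 D S = D - Rs D S" unfolding D2_def by (rule flp_props(2)[OF assms(1) Rs_sub])
  then show ne: "D2 D S \<noteq> D" using D_minus_R_ne[OF assms] by auto
  show "rv (D2 D S) \<noteq> rv D" using rv_inj[OF D2_Hs[OF assms(1)] assms(1)] ne by blast
qed

lemma supp_S:
  assumes "D \<in> Hs n" "S \<in> set_pmf (sample_pmf (pD D) m)" "z \<in># S"
  shows "z = (0,0) \<or> (fst z \<in> Rs D S \<and> snd z = 2*j+1) \<or> z = rv D"
proof -
  have "z \<in> set_pmf (pD D)" using sample_support[OF assms(2)] assms(3) by auto
  then have "z = (0,0) \<or> (fst z \<in> D \<and> snd z = 2*j+1) \<or> z = rv D" by (rule set_pD[OF assms(1)])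
  then show ?thesis using assms(3) by (cases z) (auto simp: Rs_def)
qed

lemma size_S: "S \<in> set_pmf (sample_pmf p m) \<Longrightarrow> size S = m"
  using sample_support by blast

lemma sg_fix:
  assumes "D \<in> Hs n" "S \<in> set_pmf (sample_pmf (pD D) m)" "m < n" "z \<in># S" "z \<noteq> rv D"
  shows "sg D S z = z"
proof -
  have sz: "size S < n" using size_S[OF assms(2)] assms(3) by simp
  have ne: "rv (D2 D S) \<noteq> rv D" by (rule D2_ne(2)[OF assms(1) sz])
  have P: "D - D2 D S = D - Rs D S" "D2 D S - D = partner ` (D - Rs D S)"
    unfolding D2_def using flp_props[OF assms(1) Rs_sub] by auto
  have pn: "partner x \<notin> D" if "x \<in> D" for x using that assms(1) by (auto simp: Hs_def)
  consider "z = (0,0)" | "fst z \<in> Rs D S" "snd z = 2*j+1"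
    using supp_S[OF assms(1,2,4)] assms(5) by blast
  then show ?thesis
  proof cases
    case 1 then show ?thesis by (simp add: sg_def swp_def rv_def)
  next
    case 2
    have "fst z \<notin> (D - D2 D S) \<union> (D2 D S - D)" using 2 P Rs_sub[of D S] pn by auto
    moreover have "z \<noteq> rv (D2 D S)" "z \<noteq> rv D" using 2 by (auto simp: rv_def)
    ultimately show ?thesis unfolding sg_def swp_def by auto
  qed
qed

lemma sg_rv: "sg D S (rv D) = rv (D2 D S)"
  by (simp add: sg_def swp_def)

lemma image_sg:
  assumes "D \<in> Hs n" "S \<in> set_pmf (sample_pmf (pD D) m)" "m < n"
  shows "image_mset (sg D S) S = filter_mset (\<lambda>z. z \<noteq> rv D) S + replicate_mset (count S (rv D)) (rv (D2 D S))"
proof -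
  have S: "S = filter_mset (\<lambda>z. z \<noteq> rv D) S + filter_mset (\<lambda>z. z = rv D) S"
    by (simp add: multiset_partition[symmetric] add.commute)
  have f: "filter_mset (\<lambda>z. z = rv D) S = replicate_mset (count S (rv D)) (rv D)"
    by (simp add: filter_eq_replicate_mset)
  have "image_mset (sg D S) (filter_mset (\<lambda>z. z \<noteq> rv D) S) = image_mset id (filter_mset (\<lambda>z. z \<noteq> rv D) S)"
    by (rule image_mset_cong) (use sg_fix[OF assms] in auto)
  then have 1: "image_mset (sg D S) (filter_mset (\<lambda>z. z \<noteq> rv D) S) = filter_mset (\<lambda>z. z \<noteq> rv D) S"
    by simp
  have "image_mset (sg D S) S = image_mset (sg D S) (filter_mset (\<lambda>z. z \<noteq> rv D) S) + image_mset (sg D S) (replicate_mset (count S (rv D)) (rv D))"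
    by (subst S, subst f) simp
  also have "\<dots> = filter_mset (\<lambda>z. z \<noteq> rv D) S + replicate_mset (count S (rv D)) (rv (D2 D S))"
    unfolding 1 by (simp add: sg_rv)
  finally show ?thesis .
qed


lemma psi_props:
  assumes "D \<in> Hs n" "S \<in> set_pmf (sample_pmf (pD D) m)" "m < n"
  shows "fst (psi (D,S)) \<in> Hs n"
    "snd (psi (D,S)) \<in> set_pmf (sample_pmf (pD (fst (psi (D,S)))) m)"
    "pmf (sample_pmf (pD (fst (psi (D,S)))) m) (snd (psi (D,S))) = pmf (sample_pmf (pD D) m) S"
    "psi (psi (D,S)) = (D,S)"
    "count (snd (psi (D,S))) (rv (fst (psi (D,S)))) = count S (rv D)"
    "fst (psi (D,S)) = D2 D S"
    "snd (psi (D,S)) = filter_mset (\<lambda>z. z \<noteq> rv D) S + replicate_mset (count S (rv D)) (rv (D2 D S))"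
proof -
  define R where "R = Rs D S"
  define D' where "D' = D2 D S"
  define S' where "S' = image_mset (sg D S) S"
  have ps: "psi (D,S) = (D', S')" by (simp add: psi_def D'_def S'_def)
  have sz: "size S < n" using size_S[OF assms(2)] assms(3) by simp
  have D'H: "D' \<in> Hs n" unfolding D'_def by (rule D2_Hs[OF assms(1)])
  have RD: "R \<subseteq> D" unfolding R_def by (rule Rs_sub)
  have D'f: "D' = flp D R" by (simp add: D'_def D2_def R_def)
  have sgs: "sg D S = swp D (flp D R)" by (simp add: sg_def D2_def R_def)
  have map: "pD D' = map_pmf (sg D S) (pD D)" unfolding D'f sgs by (rule map_swp[OF assms(1) RD, symmetric])
  have samp: "sample_pmf (pD D') m = map_pmf (image_mset (sg D S)) (sample_pmf (pD D) m)"
    unfolding map by (rule sample_map)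
  have inj: "inj (image_mset (sg D S))" by (rule image_mset_invol_inj) (rule sg_invol[OF assms(1)])
  have S'e: "S' = filter_mset (\<lambda>z. z \<noteq> rv D) S + replicate_mset (count S (rv D)) (rv D')"
    unfolding S'_def D'_def by (rule image_sg[OF assms])
  have ne: "rv D' \<noteq> rv D" unfolding D'_def by (rule D2_ne(2)[OF assms(1) sz])
  have nS: "\<not> rv D' \<in># S"
  proof
    assume "rv D' \<in># S"
    from supp_S[OF assms(1,2) this] ne show False by (auto simp: rv_def)
  qed
  have memS': "((u, 2*j+1) \<in># S') = ((u, 2*j+1) \<in># S)" for u
    unfolding S'e by (auto simp: rv_def)
  have RR: "Rs D' S' = R"
  proof -
    have "R \<subseteq> D'" unfolding D'f by (rule flp_props(5)[OF assms(1) RD])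
    moreover have "u \<in> R" if "u \<in> D'" "(u, 2*j+1) \<in># S" for u
      using supp_S[OF assms(1,2) that(2)] by (auto simp: R_def rv_def)
    ultimately show ?thesis unfolding Rs_def memS' by (auto simp: R_def Rs_def)
  qed
  have D'' : "D2 D' S' = D" unfolding D2_def RR unfolding D'f by (rule flp_props(4)[OF assms(1) RD])
  have sg': "sg D' S' = sg D S" unfolding sg_def D'' by (simp add: D'_def swp_sym)
  show "fst (psi (D,S)) \<in> Hs n" using ps D'H by simp
  show "snd (psi (D,S)) \<in> set_pmf (sample_pmf (pD (fst (psi (D,S)))) m)"
    unfolding ps fst_conv snd_conv samp S'_def using assms(2) by simp
  show "pmf (sample_pmf (pD (fst (psi (D,S)))) m) (snd (psi (D,S))) = pmf (sample_pmf (pD D) m) S"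
    unfolding ps fst_conv snd_conv samp S'_def by (simp add: pmf_map_inj'[OF inj])
  show "psi (psi (D,S)) = (D,S)"
  proof -
    have inv: "image_mset (sg D S) S' = S" unfolding S'_def
      by (rule image_mset_invol) (rule sg_invol[OF assms(1)])
    have "psi (D',S') = (D2 D' S', image_mset (sg D' S') S')" by (simp add: psi_def)
    then show ?thesis by (simp only: ps D'' sg' inv)
  qed
  show "count (snd (psi (D,S))) (rv (fst (psi (D,S)))) = count S (rv D)"
    unfolding ps S'e using ne nS by (simp add: count_eq_zero_iff)
  show "fst (psi (D,S)) = D2 D S" using ps D'_def by simp
  show "snd (psi (D,S)) = filter_mset (\<lambda>z. z \<noteq> rv D) S + replicate_mset (count S (rv D)) (rv (D2 D S))"
    using ps S'e D'_def by simp
qed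

end

lemma measure_J:
  assumes "finite H" "H \<noteq> {}"
  shows "measure (bind_pmf (pmf_of_set H) (\<lambda>D. map_pmf (Pair D) (Q D))) X
       = (\<Sum>D\<in>H. measure (Q D) (Pair D -` X)) / card H"
proof -
  have c: "card H > 0" using assms by (simp add: card_gt_0_iff)
  have "ennreal (measure (bind_pmf (pmf_of_set H) (\<lambda>D. map_pmf (Pair D) (Q D))) X)
      = emeasure (bind_pmf (pmf_of_set H) (\<lambda>D. map_pmf (Pair D) (Q D))) X"
    by (simp add: measure_pmf.emeasure_eq_measure)
  also have "\<dots> = (\<integral>\<^sup>+D. emeasure (map_pmf (Pair D) (Q D)) X \<partial>pmf_of_set H)"
    by (rule emeasure_bind_pmf)
  also have "\<dots> = (\<Sum>D\<in>H. emeasure (map_pmf (Pair D) (Q D)) X) / card H"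
    using assms by (simp add: nn_integral_pmf_of_set)
  also have "(\<Sum>D\<in>H. emeasure (map_pmf (Pair D) (Q D)) X) / card H = (\<Sum>D\<in>H. ennreal (measure (Q D) (Pair D -` X))) / card H"
    by (intro arg_cong2[where f="(/)"] sum.cong refl) (simp add: measure_pmf.emeasure_eq_measure)
  also have "\<dots> = ennreal ((\<Sum>D\<in>H. measure (Q D) (Pair D -` X)) / card H)"
    using c by (simp add: sum_ennreal ennreal_of_nat_eq_real_of_nat) (subst divide_ennreal, auto intro: sum_nonneg)
  finally show ?thesis by (subst (asm) ennreal_inj) (auto intro!: sum_nonneg divide_nonneg_nonneg)
qed

lemma pmf_J:
  assumes "finite H" "H \<noteq> {}" "D \<in> H"
  shows "pmf (bind_pmf (pmf_of_set H) (\<lambda>D. map_pmf (Pair D) (Q D))) (D, S) = pmf (Q D) S / card H"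
proof -
  have "pmf (bind_pmf (pmf_of_set H) (\<lambda>D. map_pmf (Pair D) (Q D))) (D, S)
      = (\<Sum>D'\<in>H. pmf (map_pmf (Pair D') (Q D')) (D, S)) / card H"
    by (rule pmf_bind_pmf_of_set[OF assms(2,1)])
  also have "(\<Sum>D'\<in>H. pmf (map_pmf (Pair D') (Q D')) (D, S)) = (\<Sum>D'\<in>H. if D' = D then pmf (Q D) S else 0)"
  proof (rule sum.cong)
    fix D' assume "D' \<in> H"
    show "pmf (map_pmf (Pair D') (Q D')) (D, S) = (if D' = D then pmf (Q D) S else 0)"
    proof (cases "D' = D")
      case True
      have "inj (Pair D)" by (simp add: inj_on_def)
      then show ?thesis using True pmf_map_inj'[OF \<open>inj (Pair D)\<close>, of "Q D" S] by simp
    next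
      case False
      then show ?thesis by (auto simp: pmf_eq_0_set_pmf)
    qed
  qed simp
  also have "\<dots> = pmf (Q D) S" using assms by simp
  finally show ?thesis .
qed

lemma map_pmf_invol:
  assumes "\<And>z. z \<in> set_pmf J \<Longrightarrow> \<psi> (\<psi> z) = z \<and> \<psi> z \<in> set_pmf J \<and> pmf J (\<psi> z) = pmf J z"
  shows "map_pmf \<psi> J = J"
proof (rule pmf_eqI)
  fix z
  have "pmf (map_pmf \<psi> J) z = measure J (\<psi> -` {z} \<inter> set_pmf J)"
    by (simp add: pmf_map measure_Int_set_pmf)
  also have "\<dots> = pmf J z"
  proof (cases "z \<in> set_pmf J")
    case True
    have "\<psi> -` {z} \<inter> set_pmf J = {\<psi> z}" using assms True by force
    then show ?thesis using assms True by (simp add: measure_pmf_single)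
  next
    case False
    have "\<psi> -` {z} \<inter> set_pmf J = {}" using assms False by force
    then show ?thesis using False by (simp add: set_pmf_eq)
  qed
  finally show "pmf (map_pmf \<psi> J) z = pmf J z" .
qed

lemma tv_lower: "\<bar>measure_pmf.prob q E - measure_pmf.prob p E\<bar> \<le> tv_dist q p"
  unfolding tv_dist_def
proof (rule cSUP_upper)
  show "bdd_above (range (\<lambda>A. \<bar>measure_pmf.prob q A - measure_pmf.prob p A\<bar>))"
  proof (rule bdd_aboveI)
    fix x assume "x \<in> range (\<lambda>A. \<bar>measure_pmf.prob q A - measure_pmf.prob p A\<bar>)"
    then obtain A where "x = \<bar>measure_pmf.prob q A - measure_pmf.prob p A\<bar>" by auto
    moreover have "0 \<le> measure_pmf.prob q A" "measure_pmf.prob q A \<le> 1"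
      "0 \<le> measure_pmf.prob p A" "measure_pmf.prob p A \<le> 1" by auto
    ultimately show "x \<le> 1" by linarith
  qed
qed simp


context cset
begin

lemma pmf_mid': "D \<in> Hs n \<Longrightarrow> pmf (pD D) (u, Suc (2*j)) = (if u \<in> D then cc / real n else 0)"
  using pmf_mid[of D u] by simp

lemma measure_E:
  assumes "D \<in> Hs n" "R \<subseteq> D"
  shows "measure_pmf.prob (pD D) ((\<lambda>u. (u, 2*j+1)) ` (D - R)) = cc * card (D - R) / n"
    "measure_pmf.prob (pD (flp D R)) ((\<lambda>u. (u, 2*j+1)) ` (D - R)) = 0"
proof -
  have fin: "finite (D - R)" using Hs_finite_mem[OF assms(1)] by auto
  have inj: "inj_on (\<lambda>u. (u, 2*j+1)) (D - R)" by (auto simp: inj_on_def)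
  have D'H: "flp D R \<in> Hs n" by (rule flp_Hs[OF assms])
  have "measure_pmf.prob (pD D) ((\<lambda>u. (u, 2*j+1)) ` (D - R)) = sum (pmf (pD D)) ((\<lambda>u. (u, 2*j+1)) ` (D - R))"
    by (rule measure_measure_pmf_finite) (use fin in simp)
  also have "\<dots> = (\<Sum>u\<in>D - R. pmf (pD D) (u, 2*j+1))"
    by (simp only: sum.reindex[OF inj] o_def)
  also have "\<dots> = (\<Sum>u\<in>D - R. cc / n)" by (intro sum.cong refl) (simp add: pmf_mid'[OF assms(1)])
  finally show "measure_pmf.prob (pD D) ((\<lambda>u. (u, 2*j+1)) ` (D - R)) = cc * card (D - R) / n" by simp
  have dis: "u \<notin> flp D R" if "u \<in> D - R" for u using flp_props(2)[OF assms] that by blast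
  have "measure_pmf.prob (pD (flp D R)) ((\<lambda>u. (u, 2*j+1)) ` (D - R)) = sum (pmf (pD (flp D R))) ((\<lambda>u. (u, 2*j+1)) ` (D - R))"
    by (rule measure_measure_pmf_finite) (use fin in simp)
  also have "\<dots> = (\<Sum>u\<in>D - R. pmf (pD (flp D R)) (u, 2*j+1))"
    by (simp only: sum.reindex[OF inj] o_def)
  also have "\<dots> = (\<Sum>u\<in>D - R. 0)" by (intro sum.cong refl) (simp add: pmf_mid'[OF D'H] dis)
  finally show "measure_pmf.prob (pD (flp D R)) ((\<lambda>u. (u, 2*j+1)) ` (D - R)) = 0" by simp
qed

lemma cc_nonneg: "0 \<le> cc"
  using j1 jk by (simp add: cc_def frac_le)

lemma no_double:
  assumes "D \<in> Hs n" "S \<in> set_pmf (sample_pmf (pD D) m)" "2 * m < n"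
    and "tv_dist q (pD D) \<le> \<theta>" "tv_dist q (pD (D2 D S)) \<le> \<theta>" "\<theta> < cc / 4"
  shows False
proof -
  define R where "R = Rs D S"
  have RD: "R \<subseteq> D" unfolding R_def by (rule Rs_sub)
  let ?E = "(\<lambda>u. (u, 2*j+1)) ` (D - R)"
  have cR: "card R \<le> m" using Rs_card[of D S] size_S[OF assms(2)] by (simp add: R_def)
  have cD: "card (D - R) = n - card R" using Hs_card[OF assms(1)] RD Hs_finite_mem[OF assms(1)]
    by (simp add: card_Diff_subset finite_subset)
  have half: "real n \<le> 2 * real (card (D - R))" using cD cR assms(3) by linarith
  have n0: "real n > 0" using assms(3) by simp
  have m1: "measure_pmf.prob (pD D) ?E \<ge> cc / 2"
  proof -
    have "cc / 2 = cc * (real n / 2) / n" using n0 by simp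
    also have "\<dots> \<le> cc * card (D - R) / n" using half cc_nonneg n0
      by (intro divide_right_mono mult_left_mono) auto
    finally show ?thesis using measure_E(1)[OF assms(1) RD] by simp
  qed
  have m2: "measure_pmf.prob (pD (D2 D S)) ?E = 0"
    unfolding D2_def R_def[symmetric] by (rule measure_E(2)[OF assms(1) RD])
  have t1: "\<bar>measure_pmf.prob q ?E - measure_pmf.prob (pD D) ?E\<bar> \<le> \<theta>"
    using tv_lower[of q ?E "pD D"] assms(4) by linarith
  have t2: "\<bar>measure_pmf.prob q ?E - measure_pmf.prob (pD (D2 D S)) ?E\<bar> \<le> \<theta>"
    using tv_lower[of q ?E "pD (D2 D S)"] assms(5) by linarith
  show False using t1 t2 m1 m2 assms(6) by (simp add: abs_le_iff)
qed

lemma core: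
  fixes A :: "pt multiset \<Rightarrow> pt pmf" and v :: "nat set \<Rightarrow> pt multiset \<Rightarrow> pt multiset"
    and t :: nat and \<theta> :: real and m :: nat
  assumes mn: "2 * m < n" and th: "\<theta> < cc / 4"
    and inv: "\<And>D S. D \<in> Hs n \<Longrightarrow> S \<in> set_pmf (sample_pmf (pD D) m) \<Longrightarrow> count S (rv D) \<le> t
          \<Longrightarrow> v (D2 D S) (image_mset (sg D S) S) = v D S"
    and succ: "\<And>D. D \<in> Hs n \<Longrightarrow> measure_pmf.prob (sample_pmf (pD D) m) {S. tv_dist (A (v D S)) (pD D) \<le> \<theta>} \<ge> 7/8"
    and bad: "\<And>D. D \<in> Hs n \<Longrightarrow> measure_pmf.prob (sample_pmf (pD D) m) {S. t < count S (rv D)} \<le> 1/8"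
  shows False
proof -
  define H where "H = Hs n"
  have Hf: "finite H" "H \<noteq> {}" unfolding H_def using Hs_finite Hs_nonempty by auto
  define J where "J = bind_pmf (pmf_of_set H) (\<lambda>D. map_pmf (Pair D) (sample_pmf (pD D) m))"
  have mn': "m < n" using mn by simp
  have setJ: "z \<in> set_pmf J \<longleftrightarrow> fst z \<in> H \<and> snd z \<in> set_pmf (sample_pmf (pD (fst z)) m)" for z
    unfolding J_def using Hf by (cases z) auto
  have pmfJ: "pmf J (D, S) = pmf (sample_pmf (pD D) m) S / card H" if "D \<in> H" for D S
    unfolding J_def by (rule pmf_J[OF Hf that])
  have psiJ: "map_pmf psi J = J"
  proof (rule map_pmf_invol)
    fix z assume z: "z \<in> set_pmf J"
    obtain D S where zDS: "z = (D, S)" by (cases z)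
    have DH: "D \<in> Hs n" and S: "S \<in> set_pmf (sample_pmf (pD D) m)" using z setJ zDS H_def by auto
    note P = psi_props[OF DH S mn']
    have "psi z \<in> set_pmf J" unfolding setJ zDS H_def using P(1,2) by simp
    moreover have "pmf J (psi z) = pmf J z"
    proof -
      have "pmf J (psi z) = pmf J (fst (psi z), snd (psi z))" by simp
      also have "\<dots> = pmf (sample_pmf (pD (fst (psi z))) m) (snd (psi z)) / card H"
        using P(1) zDS H_def by (intro pmfJ) simp
      also have "\<dots> = pmf (sample_pmf (pD D) m) S / card H" using P(3) zDS by simp
      also have "\<dots> = pmf J z" using pmfJ DH H_def zDS by simp
      finally show ?thesis .
    qed
    ultimately show "psi (psi z) = z \<and> psi z \<in> set_pmf J \<and> pmf J (psi z) = pmf J z"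
      using P(4) zDS by simp
  qed
  define Suc' where "Suc' = {z. tv_dist (A (v (fst z) (snd z))) (pD (fst z)) \<le> \<theta>}"
  define Bad where "Bad = {z. t < count (snd z) (rv (fst z))}"
  define E1 where "E1 = Suc' - Bad"
  define E2 where "E2 = psi -` E1"
  have avg_succ: "measure_pmf.prob J Suc' \<ge> 7/8"
  proof -
    have "measure_pmf.prob J Suc' = (\<Sum>D\<in>H. measure_pmf.prob (sample_pmf (pD D) m) (Pair D -` Suc')) / card H"
      unfolding J_def by (rule measure_J[OF Hf])
    also have "(\<Sum>D\<in>H. measure_pmf.prob (sample_pmf (pD D) m) (Pair D -` Suc')) \<ge> (\<Sum>D\<in>H. 7/8)"
    proof (intro sum_mono)
      fix D assume DH: "D \<in> H"
      have "Pair D -` Suc' = {S. tv_dist (A (v D S)) (pD D) \<le> \<theta>}" by (auto simp: Suc'_def)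
      then show "7/8 \<le> measure_pmf.prob (sample_pmf (pD D) m) (Pair D -` Suc')"
        using succ[of D] DH H_def by simp
    qed
    then have "(\<Sum>D\<in>H. measure_pmf.prob (sample_pmf (pD D) m) (Pair D -` Suc')) / card H \<ge> 7/8"
      using Hf by (simp add: card_gt_0_iff field_simps)
    finally show ?thesis by simp
  qed
  have avg_bad: "measure_pmf.prob J Bad \<le> 1/8"
  proof -
    have "measure_pmf.prob J Bad = (\<Sum>D\<in>H. measure_pmf.prob (sample_pmf (pD D) m) (Pair D -` Bad)) / card H"
      unfolding J_def by (rule measure_J[OF Hf])
    also have "(\<Sum>D\<in>H. measure_pmf.prob (sample_pmf (pD D) m) (Pair D -` Bad)) \<le> (\<Sum>D\<in>H. 1/8)"
    proof (intro sum_mono)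
      fix D assume DH: "D \<in> H"
      have "Pair D -` Bad = {S. t < count S (rv D)}" by (auto simp: Bad_def)
      then show "measure_pmf.prob (sample_pmf (pD D) m) (Pair D -` Bad) \<le> 1/8"
        using bad[of D] DH H_def by simp
    qed
    then have "(\<Sum>D\<in>H. measure_pmf.prob (sample_pmf (pD D) m) (Pair D -` Bad)) / card H \<le> 1/8"
      using Hf by (simp add: card_gt_0_iff field_simps)
    finally show ?thesis by simp
  qed
  have eq12: "measure_pmf.prob J E2 = measure_pmf.prob J E1"
    unfolding E2_def by (metis measure_map_pmf psiJ)
  have disj: "E1 \<inter> E2 \<inter> set_pmf J = {}"
  proof (rule ccontr)
    assume "E1 \<inter> E2 \<inter> set_pmf J \<noteq> {}"
    then obtain z where z: "z \<in> E1" "z \<in> E2" "z \<in> set_pmf J" by blast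
    obtain D S where zDS: "z = (D,S)" by (cases z)
    have in1: "(D,S) \<in> E1" and in2: "psi (D,S) \<in> E1" and inJ: "(D,S) \<in> set_pmf J"
      using z zDS unfolding E2_def by auto
    have DH: "D \<in> Hs n" and S: "S \<in> set_pmf (sample_pmf (pD D) m)" using inJ setJ H_def by auto
    note P = psi_props[OF DH S mn']
    have good: "count S (rv D) \<le> t" using in1 by (simp add: E1_def Bad_def)
    have view: "v (fst (psi (D,S))) (snd (psi (D,S))) = v D S"
      using inv[OF DH S good] by (simp add: psi_def)
    have s1: "tv_dist (A (v D S)) (pD D) \<le> \<theta>" using in1 by (simp add: E1_def Suc'_def)
    have s2: "tv_dist (A (v D S)) (pD (D2 D S)) \<le> \<theta>"
      using in2 view P(6) by (simp add: E1_def Suc'_def)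
    show False by (rule no_double[OF DH S mn s1 s2 th])
  qed
  have "measure_pmf.prob J E2 = measure_pmf.prob J (E2 \<inter> set_pmf J)" by (simp add: measure_Int_set_pmf)
  also have "\<dots> \<le> measure_pmf.prob J (E2 - E1)"
    using disj by (intro measure_pmf.finite_measure_mono) auto
  finally have "measure_pmf.prob J E1 + measure_pmf.prob J E2 \<le> measure_pmf.prob J E1 + measure_pmf.prob J (E2 - E1)"
    by simp
  also have "\<dots> = measure_pmf.prob J (E1 \<union> E2)" by (simp add: measure_pmf.finite_measure_Union')
  also have "\<dots> \<le> 1" by simp
  finally have e1: "measure_pmf.prob J E1 \<le> 1/2" using eq12 by simp
  have "measure_pmf.prob J Suc' \<le> measure_pmf.prob J (E1 \<union> Bad)"
    by (intro measure_pmf.finite_measure_mono) (auto simp: E1_def)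
  also have "\<dots> = measure_pmf.prob J E1 + measure_pmf.prob J (Bad - E1)" by (simp add: measure_pmf.finite_measure_Union')
  also have "\<dots> \<le> measure_pmf.prob J E1 + measure_pmf.prob J Bad"
    by (intro add_left_mono measure_pmf.finite_measure_mono) auto
  finally show False using e1 avg_succ avg_bad by linarith
qed

end

lemma budget_tb:
  assumes "0 \<le> (\<eta>::real)"
  shows "\<eta> * real s - 1 < real (nat \<lfloor>\<eta> * real s\<rfloor>)" "real (nat \<lfloor>\<eta> * real s\<rfloor>) \<le> \<eta> * real s"
proof -
  have nn: "0 \<le> \<eta> * real s" using assms by simp
  have e: "real (nat \<lfloor>\<eta> * real s\<rfloor>) = real_of_int \<lfloor>\<eta> * real s\<rfloor>" using nn by simp
  show "\<eta> * real s - 1 < real (nat \<lfloor>\<eta> * real s\<rfloor>)" unfolding e by linarith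
  show "real (nat \<lfloor>\<eta> * real s\<rfloor>) \<le> \<eta> * real s" unfolding e by linarith
qed

lemma params:
  assumes "superlinear g" "(\<alpha>::real) > 1"
  shows "\<exists>j. 1 \<le> j \<and> 128 * \<alpha> * real j \<le> real (g j)"
proof -
  have "filterlim (\<lambda>j. real (g j) / real j) at_top sequentially"
    using assms(1) by (simp add: superlinear_def)
  then have "eventually (\<lambda>j. 128 * \<alpha> \<le> real (g j) / real j) sequentially"
    by (simp add: filterlim_at_top)
  then obtain N where N: "\<And>j. j \<ge> N \<Longrightarrow> 128 * \<alpha> \<le> real (g j) / real j"
    by (auto simp: eventually_sequentially)
  have "128 * \<alpha> \<le> real (g (Suc N)) / real (Suc N)" by (rule N) simp
  then have "128 * \<alpha> * real (Suc N) \<le> real (g (Suc N))"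
    by (simp add: le_divide_eq)
  then show ?thesis by (intro exI[of _ "Suc N"]) simp
qed

lemma theta_bound:
  assumes "1 \<le> j" "128 * \<alpha> * real j \<le> real k" "(\<alpha>::real) > 1"
  shows "\<alpha> * (8 / real k) + 1 / (32 * real j) < (1 / real j - 1 / real k) / 4"
proof -
  have j0: "real j > 0" using assms by simp
  have k0: "real k > 0" using assms j0
    by (smt (verit) mult_pos_pos)
  have a1: "\<alpha> * (8 / real k) \<le> (1 / real j) / 16"
    using assms j0 k0 by (simp add: field_simps)
  have a2: "1 / real k \<le> (1 / real j) / 128"
  proof -
    have "128 * real j * 1 \<le> 128 * real j * \<alpha>" using assms(3) j0 by (intro mult_left_mono) auto
    then have "128 * real j \<le> real k" using assms(2) by (simp add: ac_simps)
    then show ?thesis using j0 k0 by (simp add: field_simps)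
  qed
  have a3: "1 / (32 * real j) = (1 / real j) / 32" by simp
  have x0: "1 / real j > 0" using j0 by simp
  have gen: "z + w < (x - y)/4" if "z \<le> x/16" "y \<le> x/128" "w = x/32" "0 < x" for x y z w :: real
    using that by (simp add: field_simps)
  show ?thesis by (rule gen[OF a1 a2 a3 x0])
qed

context cset
begin

lemma bad_bound:
  assumes "D \<in> Hs n" "8 * real m / real k < real t + 1"
  shows "measure_pmf.prob (sample_pmf (pD D) m) {S. t < count S (rv D)} \<le> 1/8"
proof -
  have k0: "real k > 0" using j1 jk by simp
  have "measure_pmf.prob (sample_pmf (pD D) m) {S. t < count S (rv D)} * (real t + 1) \<le> real m * pmf (pD D) (rv D)"
    by (rule sample_markov)
  also have "\<dots> = real m / real k" by (simp add: pmf_rv[OF assms(1)])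
  also have "\<dots> < (real t + 1) / 8" using assms(2) k0 by (simp add: field_simps)
  finally have h: "measure_pmf.prob (sample_pmf (pD D) m) {S. t < count S (rv D)} * (real t + 1) < 1/8 * (real t + 1)"
    by simp
  have "measure_pmf.prob (sample_pmf (pD D) m) {S. t < count S (rv D)} < 1/8"
    using mult_less_cancel_right_pos[of "real t + 1"] h by simp
  then show ?thesis by simp
qed

lemma filter_split: "S = filter_mset (\<lambda>z. z \<noteq> a) S + replicate_mset (count S a) a"
proof -
  have "S = filter_mset (\<lambda>z. z \<noteq> a) S + filter_mset (\<lambda>z. z = a) S"
    by (simp add: multiset_partition[symmetric] add.commute)
  also have "filter_mset (\<lambda>z. z = a) S = replicate_mset (count S a) a"
    by (simp add: filter_eq_replicate_mset)
  finally show ?thesis .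
qed

end

lemma additive_case:
  fixes B :: "nat \<Rightarrow> nat set" and g :: "nat \<Rightarrow> nat" and \<alpha> :: real
  assumes Bb: "bij_betw B UNIV {A :: nat set. finite A}"
    and sl: "superlinear g"
    and al: "\<alpha> > 1"
  shows "\<not> adaptively_additively_robustly_learnable (C_class B g) \<alpha>"
proof
  assume "adaptively_additively_robustly_learnable (C_class B g) \<alpha>"
  then obtain A :: "pt multiset \<Rightarrow> pt pmf" and m0 :: "real \<Rightarrow> real \<Rightarrow> nat" where L:
    "\<And>p V \<eta> \<epsilon> \<delta> m. p \<in> C_class B g \<Longrightarrow> additive_adv V \<Longrightarrow> has_budget V \<eta> \<Longrightarrow>
       0 < \<epsilon> \<Longrightarrow> \<epsilon> < 1 \<Longrightarrow> 0 < \<delta> \<Longrightarrow> \<delta> < 1 \<Longrightarrow> m0 \<epsilon> \<delta> \<le> m \<Longrightarrow>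
       measure_pmf.prob (bind_pmf (sample_pmf p m) V) {T. tv_dist (A T) p \<le> \<alpha> * \<eta> + \<epsilon>} \<ge> 1 - \<delta>"
    unfolding adaptive_robustly_learnable_def by blast
  obtain j where j: "1 \<le> j" "128 * \<alpha> * real j \<le> real (g j)" using params[OF sl al] by blast
  define k where "k = g j"
  define \<eta> :: real where "\<eta> = 8 / real k"
  define \<epsilon> :: real where "\<epsilon> = 1 / (32 * real j)"
  define \<delta> :: real where "\<delta> = 1 / 8"
  define m where "m = m0 \<epsilon> \<delta>"
  define n where "n = 2 * m + 1"
  define \<theta> where "\<theta> = \<alpha> * \<eta> + \<epsilon>"
  define tb where "tb = (\<lambda>s::nat. nat \<lfloor>\<eta> * real s\<rfloor>)"
  have j0: "real j \<ge> 1" using j by simp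
  have jk128: "128 * real j \<le> real k"
  proof -
    have "128 * real j * 1 \<le> 128 * real j * \<alpha>" using al j0 by (intro mult_left_mono) auto
    then show ?thesis using j(2) by (simp add: ac_simps k_def)
  qed
  have jk: "j \<le> k" using jk128 j0 by linarith
  have k0: "real k > 0" using jk128 j0 by linarith
  have eta0: "0 \<le> \<eta>" using k0 by (simp add: \<eta>_def)
  interpret cset B j k n using Bb j(1) jk by unfold_locales (auto simp: n_def)
  have th: "\<theta> < cc / 4" unfolding \<theta>_def \<eta>_def \<epsilon>_def cc_def
    by (rule theta_bound[OF j(1) _ al]) (use j(2) k_def in simp)
  define v where "v = (\<lambda>D S. S + replicate_mset (min (count S (rv D)) (tb (size S))) (rv (D2 D S))
      + replicate_mset (tb (size S) - count S (rv D)) (0,0))"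
  have mn: "2 * m < n" by (simp add: n_def)
  have succ: "measure_pmf.prob (sample_pmf (pD D) m) {S. tv_dist (A (v D S)) (pD D) \<le> \<theta>} \<ge> 7/8"
    if DH: "D \<in> Hs n" for D
  proof -
    have inC: "pD D \<in> C_class B g"
    proof -
      have "B (idx D) = D" "D \<noteq> {}" using B_idx Hs_finite_mem[OF DH] Hs_card[OF DH] n_def by auto
      moreover have "pD D = p_dist B (idx D) j (g j)" using pD_def[of D] by (simp add: k_def)
      ultimately show ?thesis unfolding C_class_def using j(1) jk k_def by blast
    qed
    define V where "V = (\<lambda>S. return_pmf (v D S))"
    have adv: "additive_adv V" unfolding additive_adv_def V_def v_def by auto
    have bud: "has_budget V \<eta>"
      unfolding has_budget_def
    proof (intro exI[of _ "\<lambda>s. s + tb s"] conjI allI ballI)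
      fix S T assume "T \<in> set_pmf (V S)"
      then show "size T = size S + tb (size S)" by (auto simp: V_def v_def)
    next
      fix s :: nat
      show "\<eta> * real s - 1 < \<bar>real (s + tb s) - real s\<bar>" "\<bar>real (s + tb s) - real s\<bar> \<le> \<eta> * real s"
        using budget_tb[OF eta0, of s] by (simp_all add: tb_def)
    qed
    have e0: "0 < \<epsilon>" "\<epsilon> < 1" using j0 by (simp_all add: \<epsilon>_def)
    have "measure_pmf.prob (bind_pmf (sample_pmf (pD D) m) V) {T. tv_dist (A T) (pD D) \<le> \<alpha> * \<eta> + \<epsilon>} \<ge> 1 - \<delta>"
      by (rule L[OF inC adv bud e0]) (simp_all add: \<delta>_def m_def)
    moreover have "bind_pmf (sample_pmf (pD D) m) V = map_pmf (v D) (sample_pmf (pD D) m)"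
      by (simp add: V_def map_pmf_def)
    ultimately show ?thesis by (simp add: \<theta>_def \<delta>_def vimage_def)
  qed
  have bad: "measure_pmf.prob (sample_pmf (pD D) m) {S. tb m < count S (rv D)} \<le> 1/8"
    if DH: "D \<in> Hs n" for D
  proof (rule bad_bound[OF DH])
    have "\<eta> * real m - 1 < real (tb m)" using budget_tb[OF eta0, of m] by (simp add: tb_def)
    then show "8 * real m / real k < real (tb m) + 1" by (simp add: \<eta>_def)
  qed
  have inv: "v (D2 D S) (image_mset (sg D S) S) = v D S"
    if DH: "D \<in> Hs n" and S: "S \<in> set_pmf (sample_pmf (pD D) m)" and good: "count S (rv D) \<le> tb m" for D S
  proof -
    note P = psi_props[OF DH S, unfolded psi_def fst_conv snd_conv]
    have mn': "m < n" using mn by simp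
    note P = P[OF mn']
    have sz: "size S = m" using size_S[OF S] .
    let ?S' = "image_mset (sg D S) S" let ?c = "count S (rv D)" let ?a' = "rv (D2 D S)"
    have sz': "size ?S' = m" using sz by simp
    have c': "count ?S' (rv (D2 D S)) = ?c" using P(5) .
    have DD: "D2 (D2 D S) ?S' = D" using P(4) by simp
    have "v (D2 D S) ?S' = ?S' + replicate_mset ?c (rv D) + replicate_mset (tb m - ?c) (0,0)"
      unfolding v_def sz' c' DD using good by simp
    also have "\<dots> = filter_mset (\<lambda>z. z \<noteq> rv D) S + replicate_mset ?c ?a' + replicate_mset ?c (rv D) + replicate_mset (tb m - ?c) (0,0)"
      using P(7) by simp
    also have "\<dots> = (filter_mset (\<lambda>z. z \<noteq> rv D) S + replicate_mset ?c (rv D)) + replicate_mset ?c ?a' + replicate_mset (tb m - ?c) (0,0)"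
      by (simp add: ac_simps)
    also have "\<dots> = S + replicate_mset ?c ?a' + replicate_mset (tb m - ?c) (0,0)"
      using filter_split[of S "rv D"] by simp
    also have "\<dots> = v D S" unfolding v_def sz using good by simp
    finally show ?thesis .
  qed
  show False by (rule core[OF mn th inv succ bad])
qed


lemma subtractive_case:
  fixes B :: "nat \<Rightarrow> nat set" and g :: "nat \<Rightarrow> nat" and \<alpha> :: real
  assumes Bb: "bij_betw B UNIV {A :: nat set. finite A}"
    and sl: "superlinear g"
    and al: "\<alpha> > 1"
  shows "\<not> adaptively_subtractively_robustly_learnable (C_class B g) \<alpha>"
proof
  assume "adaptively_subtractively_robustly_learnable (C_class B g) \<alpha>"
  then obtain A :: "pt multiset \<Rightarrow> pt pmf" and m0 :: "real \<Rightarrow> real \<Rightarrow> nat" where L: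
    "\<And>p V \<eta> \<epsilon> \<delta> m. p \<in> C_class B g \<Longrightarrow> subtractive_adv V \<Longrightarrow> has_budget V \<eta> \<Longrightarrow>
       0 < \<epsilon> \<Longrightarrow> \<epsilon> < 1 \<Longrightarrow> 0 < \<delta> \<Longrightarrow> \<delta> < 1 \<Longrightarrow> m0 \<epsilon> \<delta> \<le> m \<Longrightarrow>
       measure_pmf.prob (bind_pmf (sample_pmf p m) V) {T. tv_dist (A T) p \<le> \<alpha> * \<eta> + \<epsilon>} \<ge> 1 - \<delta>"
    unfolding adaptive_robustly_learnable_def by blast
  obtain j where j: "1 \<le> j" "128 * \<alpha> * real j \<le> real (g j)" using params[OF sl al] by blast
  define k where "k = g j"
  define \<eta> :: real where "\<eta> = 8 / real k"
  define \<epsilon> :: real where "\<epsilon> = 1 / (32 * real j)"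
  define \<delta> :: real where "\<delta> = 1 / 8"
  define m where "m = m0 \<epsilon> \<delta>"
  define n where "n = 2 * m + 1"
  define \<theta> where "\<theta> = \<alpha> * \<eta> + \<epsilon>"
  define tb where "tb = (\<lambda>s::nat. nat \<lfloor>\<eta> * real s\<rfloor>)"
  have j0: "real j \<ge> 1" using j by simp
  have jk128: "128 * real j \<le> real k"
  proof -
    have "128 * real j * 1 \<le> 128 * real j * \<alpha>" using al j0 by (intro mult_left_mono) auto
    then show ?thesis using j(2) by (simp add: ac_simps k_def)
  qed
  have jk: "j \<le> k" using jk128 j0 by linarith
  have k0: "real k > 0" using jk128 j0 by linarith
  have eta0: "0 \<le> \<eta>" using k0 by (simp add: \<eta>_def)
  interpret cset B j k n using Bb j(1) jk by unfold_locales (auto simp: n_def)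
  have th: "\<theta> < cc / 4" unfolding \<theta>_def \<eta>_def \<epsilon>_def cc_def
    by (rule theta_bound[OF j(1) _ al]) (use j(2) k_def in simp)
  define lst :: "pt multiset \<Rightarrow> pt list" where "lst = (\<lambda>F. SOME xs. mset xs = F)"
  have mlst: "mset (lst F) = F" for F unfolding lst_def by (rule someI_ex) (rule ex_mset)
  define v where "v = (\<lambda>D S. mset (drop (tb (size S)) (replicate (count S (rv D)) (rv D)
      @ lst (filter_mset (\<lambda>z. z \<noteq> rv D) S))))"
  have eta1: "\<eta> \<le> 1" using jk128 j0 by (simp add: \<eta>_def field_simps)
  have tbs: "tb s \<le> s" for s
  proof -
    have "real (tb s) \<le> \<eta> * real s" using budget_tb[OF eta0, of s] by (simp add: tb_def)
    also have "\<dots> \<le> 1 * real s" using eta1 by (intro mult_right_mono) auto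
    finally show ?thesis by simp
  qed
  have mL: "mset (replicate (count S (rv D)) (rv D) @ lst (filter_mset (\<lambda>z. z \<noteq> rv D) S)) = S" for S D
    using filter_split[of S "rv D"] by (simp add: add.commute mlst)
  have drop_sub: "mset (drop t xs) \<subseteq># mset xs" for t and xs :: "pt list"
    by (metis append_take_drop_id mset_append mset_subset_eq_add_right)
  have mn: "2 * m < n" by (simp add: n_def)
  have succ: "measure_pmf.prob (sample_pmf (pD D) m) {S. tv_dist (A (v D S)) (pD D) \<le> \<theta>} \<ge> 7/8"
    if DH: "D \<in> Hs n" for D
  proof -
    have inC: "pD D \<in> C_class B g"
    proof -
      have "B (idx D) = D" "D \<noteq> {}" using B_idx Hs_finite_mem[OF DH] Hs_card[OF DH] n_def by auto
      moreover have "pD D = p_dist B (idx D) j (g j)" using pD_def[of D] by (simp add: k_def)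
      ultimately show ?thesis unfolding C_class_def using j(1) jk k_def by blast
    qed
    define V where "V = (\<lambda>S. return_pmf (v D S))"
    have adv: "subtractive_adv V" unfolding subtractive_adv_def
    proof (intro allI ballI)
      fix S T assume "T \<in> set_pmf (V S)"
      then have T: "T = v D S" by (simp add: V_def)
      show "T \<subseteq># S" unfolding T v_def
        using drop_sub[of "tb (size S)" "replicate (count S (rv D)) (rv D) @ lst (filter_mset (\<lambda>z. z \<noteq> rv D) S)"]
        unfolding mL[of S D] .
    qed
    have bud: "has_budget V \<eta>"
      unfolding has_budget_def
    proof (intro exI[of _ "\<lambda>s. s - tb s"] conjI allI ballI)
      fix S T assume "T \<in> set_pmf (V S)"
      then have "T = v D S" by (simp add: V_def)
      also have "size (v D S) = size S - tb (size S)"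
        unfolding v_def size_mset length_drop
        using arg_cong[OF mL[of S D], of size] by (simp del: mset_append)
      finally show "size T = size S - tb (size S)" .
    next
      fix s :: nat
      have e: "\<bar>real (s - tb s) - real s\<bar> = real (tb s)" using tbs[of s] by (simp add: of_nat_diff)
      show "\<eta> * real s - 1 < \<bar>real (s - tb s) - real s\<bar>" "\<bar>real (s - tb s) - real s\<bar> \<le> \<eta> * real s"
        unfolding e using budget_tb[OF eta0, of s] by (simp_all add: tb_def)
    qed
    have e0: "0 < \<epsilon>" "\<epsilon> < 1" using j0 by (simp_all add: \<epsilon>_def)
    have "measure_pmf.prob (bind_pmf (sample_pmf (pD D) m) V) {T. tv_dist (A T) (pD D) \<le> \<alpha> * \<eta> + \<epsilon>} \<ge> 1 - \<delta>"
      by (rule L[OF inC adv bud e0]) (simp_all add: \<delta>_def m_def)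
    moreover have "bind_pmf (sample_pmf (pD D) m) V = map_pmf (v D) (sample_pmf (pD D) m)"
      by (simp add: V_def map_pmf_def)
    ultimately show ?thesis by (simp add: \<theta>_def \<delta>_def vimage_def)
  qed
  have bad: "measure_pmf.prob (sample_pmf (pD D) m) {S. tb m < count S (rv D)} \<le> 1/8"
    if DH: "D \<in> Hs n" for D
  proof (rule bad_bound[OF DH])
    have "\<eta> * real m - 1 < real (tb m)" using budget_tb[OF eta0, of m] by (simp add: tb_def)
    then show "8 * real m / real k < real (tb m) + 1" by (simp add: \<eta>_def)
  qed
  have inv: "v (D2 D S) (image_mset (sg D S) S) = v D S"
    if DH: "D \<in> Hs n" and S: "S \<in> set_pmf (sample_pmf (pD D) m)" and good: "count S (rv D) \<le> tb m" for D S
  proof -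
    note P = psi_props[OF DH S, unfolded psi_def fst_conv snd_conv]
    have mn': "m < n" using mn by simp
    note P = P[OF mn']
    have sz: "size S = m" using size_S[OF S] .
    let ?S' = "image_mset (sg D S) S" let ?c = "count S (rv D)" let ?a' = "rv (D2 D S)"
    have sz': "size ?S' = m" using sz by simp
    have c': "count ?S' (rv (D2 D S)) = ?c" using P(5) .
    have DD: "D2 (D2 D S) ?S' = D" using P(4) by simp
    let ?F = "filter_mset (\<lambda>z. z \<noteq> rv D) S"
    have S'e: "?S' = ?F + replicate_mset ?c ?a'" using P(7) by simp
    have cF: "count ?F ?a' = 0" using c' S'e by simp
    have fF: "filter_mset (\<lambda>z. z \<noteq> ?a') ?S' = ?F"
    proof -
      have "filter_mset (\<lambda>z. z \<noteq> ?a') ?F = ?F"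
        using cF by (auto simp: multiset_eq_iff)
      then show ?thesis unfolding S'e by simp
    qed
    have dr: "drop (tb m) (replicate ?c a @ xs) = drop (tb m - ?c) xs" for a :: pt and xs
      using good by simp
    have "v (D2 D S) ?S' = mset (drop (tb m - ?c) (lst ?F))"
      unfolding v_def sz' c' fF dr ..
    also have "\<dots> = v D S" unfolding v_def sz dr ..
    finally show ?thesis .
  qed
  show False by (rule core[OF mn th inv succ bad])
qed

theorem corollary6p3:
  fixes B :: "nat \<Rightarrow> nat set" and g :: "nat \<Rightarrow> nat" and \<alpha> :: real
  assumes "bij_betw B UNIV {A :: nat set. finite A}"
    and "superlinear g"
    and "\<alpha> > 1"
  shows "\<not> adaptively_additively_robustly_learnable (C_class B g) \<alpha> \<and>
         \<not> adaptively_subtractively_robustly_learnable (C_class B g) \<alpha>"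
  using additive_case[OF assms] subtractive_case[OF assms] by blast

end
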